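(* Consider the planted dense subgraph problem with $\rho\le1/2$ and $0<q_0<q_1<1$, and let $\nu=\min\{\rho,q_0,1-q_1\}$. Let $k\ge0$ be an integer, $D=2k+1$, and \[ f(Y)=\tau_k\Big(\frac{1}{(q_1-q_0)\rho}\Big(\frac{1}{n-1}\sum_{i=2}^nY_{1i}-q_0\Big)\Big). \] For any $0<r<1$, if $\frac{(q_1-q_0)^2}{q_0}\ge\frac{216}{r^2\rho^2(n-1)}[\log4+3D\log(9/\nu)]$ and $q_1\rho\ge\frac{864}{r^2(n-1)}[\log4+3D\log(9/\nu)]$, then $\mathbb{E}(f(Y)-x)^2\le D^2r^{D-1}$.
   Context: Planted dense subgraph problem: $v\in\{0,1\}^n$ has i.i.d. $\mathrm{Bernoulli}(\rho)$ entries; conditionally on $v$, for each pair $i<j$ independently, $Y_{ij}\sim\mathrm{Bernoulli}(q_0+(q_1-q_0)v_iv_j)$ (with $Y_{1i}$ meaning the entry for the pair $\{1,i\}$); target $x=v_1$. $\tau_k(y)=(2k+1)\binom{2k}{k}\int_0^yt^k(1-t)^k\,dt$, a polynomial of degree $2k+1$. Logarithms are natural. *)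

theory Defs
  imports "HOL-Probability.Probability"
begin

text \<open>The polynomial tau_k(y) = (2k+1) binom(2k,k) int_0^y t^k (1-t)^k dt
  (oriented integral, so negative y gives the negated integral over [y,0]).\<close>
definition tau :: "nat \<Rightarrow> real \<Rightarrow> real" where
  "tau k y = real (2*k+1) * real ((2*k) choose k) *
     (LBINT t=ereal 0..ereal y. t ^ k * (1 - t) ^ k)"

definition pds_vertices :: "nat \<Rightarrow> real \<Rightarrow> (nat \<Rightarrow> bool) pmf" where
  "pds_vertices n \<rho> = Pi_pmf {1..n} False (\<lambda>_. bernoulli_pmf \<rho>)"

definition pds_edges ::
  "nat \<Rightarrow> real \<Rightarrow> real \<Rightarrow> (nat \<Rightarrow> bool) \<Rightarrow> (nat \<times> nat \<Rightarrow> bool) pmf" where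
  "pds_edges n q0 q1 v = Pi_pmf {(i, j). 1 \<le> i \<and> i < j \<and> j \<le> n} False
     (\<lambda>(i, j). bernoulli_pmf (q0 + (q1 - q0) * (of_bool (v i) * of_bool (v j))))"

definition pds :: "nat \<Rightarrow> real \<Rightarrow> real \<Rightarrow> real \<Rightarrow> ((nat \<Rightarrow> bool) \<times> (nat \<times> nat \<Rightarrow> bool)) pmf" where
  "pds n \<rho> q0 q1 = do { v \<leftarrow> pds_vertices n \<rho>; Y \<leftarrow> pds_edges n q0 q1 v; return_pmf (v, Y) }"

end

theory Submission
  imports Defs "HOL-Analysis.Analysis"
begin


lemma tau_deriv:
  "(tau k has_real_derivative (real (2*k+1) * real ((2*k) choose k) * (y^k * (1-y)^k))) (at y)"
proof -
  define a where "a = -\<bar>y\<bar> - 1"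
  define b where "b = \<bar>y\<bar> + 1"
  have ya: "a \<le> y" "y \<le> b" "a \<le> 0" "0 \<le> b" unfolding a_def b_def
    using abs_ge_self[of y] abs_ge_minus_self[of y] by linarith+
  have cont: "continuous_on {a..b} (\<lambda>t::real. t ^ k * (1 - t) ^ k)"
    by (intro continuous_intros)
  have d: "((\<lambda>u. LBINT t=ereal 0..ereal u. t ^ k * (1 - t) ^ k) has_vector_derivative (y^k * (1-y)^k)) (at y within {a..b})"
    by (rule interval_integral_FTC2[OF ya(3) ya(4) cont ya(1) ya(2)])
  have yi: "y \<in> interior {a..b}" unfolding interior_atLeastAtMost_real a_def b_def
    using abs_ge_self[of y] abs_ge_minus_self[of y] by simp
  have "at y within {a..b} = at y" by (rule at_within_interior[OF yi])
  with d have "((\<lambda>u. LBINT t=ereal 0..ereal u. t ^ k * (1 - t) ^ k) has_vector_derivative (y^k * (1-y)^k)) (at y)"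
    by (simp only:)
  hence "((\<lambda>u. LBINT t=ereal 0..ereal u. t ^ k * (1 - t) ^ k) has_real_derivative (y^k * (1-y)^k)) (at y)"
    by (simp add: has_real_derivative_iff_has_vector_derivative)
  hence "((\<lambda>u. real (2*k+1) * real ((2*k) choose k) * (LBINT t=ereal 0..ereal u. t ^ k * (1 - t) ^ k)) has_real_derivative
     real (2*k+1) * real ((2*k) choose k) * (y^k * (1-y)^k)) (at y)"
    by (intro DERIV_cmult)
  thus ?thesis unfolding tau_def[abs_def] .
qed

lemma tau_0: "tau k 0 = 0"
  by (simp add: tau_def zero_ereal_def)

lemma aux_cancel: "(a::real) > 0 \<Longrightarrow> b > 0 \<Longrightarrow> c > 0 \<Longrightarrow> a * (b / (c * c)) * (c * c / (a * b)) = 1"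
  by (simp add: field_simps)

lemma tau_1: "tau k 1 = 1"
proof -
  have int: "(LBINT t=ereal 0..ereal 1. t^k*(1-t)^k) = Beta (real k+1) (real k+1)"
  proof -
    have si: "set_integrable lborel {0..1::real} (\<lambda>t. t^k*(1-t)^k)"
      by (intro borel_integrable_atLeastAtMost' continuous_intros)
    have 1: "(LBINT (t::real):{0..1}. t^k*(1-t)^k) = integral {0..1} (\<lambda>t::real. t^k*(1-t)^k)"
      by (rule set_borel_integral_eq_integral(2)[OF si])
    have "((\<lambda>t. t powr (real k+1-1) * (1-t) powr (real k+1-1)) has_integral Beta (real k+1) (real k+1)) {0..1}"
      by (rule has_integral_Beta_real) auto
    hence "((\<lambda>t. t powr (real k+1-1) * (1-t) powr (real k+1-1)) has_integral Beta (real k+1) (real k+1)) {0<..<1}"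
      by (simp only: has_integral_Icc_iff_Ioo)
    hence "((\<lambda>t. t^k*(1-t)^k) has_integral Beta (real k+1) (real k+1)) {0<..<1}"
      by (rule has_integral_cong[THEN iffD1, rotated]) (auto simp: powr_realpow)
    hence 2: "((\<lambda>t. t^k*(1-t)^k) has_integral Beta (real k+1) (real k+1)) {0..1}"
      by (simp only: has_integral_Icc_iff_Ioo)
    have "(LBINT t=ereal 0..ereal 1. t^k*(1-t)^k) = (LBINT (t::real):{0..1}. t^k*(1-t)^k)"
      by (rule interval_integral_Icc) simp
    also note 1
    also have "integral {0..1} (\<lambda>t::real. t^k*(1-t)^k) = Beta (real k+1) (real k+1)"
      using 2 by (rule integral_unique)
    finally show ?thesis .
  qed
  have g1: "Gamma (real k + 1) = fact k" using Gamma_fact[of k, where 'a=real] by (simp add: add.commute)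
  have g2: "Gamma (real k + 1 + (real k + 1)) = fact (2*k+1)"
  proof -
    have e: "real k + 1 + (real k + 1) = 1 + real (2*k+1)" by simp
    show ?thesis unfolding e by (rule Gamma_fact)
  qed
  have B: "Beta (real k+1) (real k+1) = fact k * fact k / fact (2*k+1)"
    unfolding Beta_def g1 g2 by simp
  have C: "real ((2*k) choose k) = fact (2*k) / (fact k * fact k)"
    using binomial_fact[of k "2*k", where 'a=real] by (simp add: mult_2)
  have F: "(fact (2*k+1) :: real) = real (2*k+1) * fact (2*k)"
    by (simp only: fact_Suc Suc_eq_plus1[symmetric])
  have pos: "(fact k :: real) > 0" "(fact (2*k) :: real) > 0" by auto
  have "tau k 1 = real (2*k+1) * (fact (2*k) / (fact k * fact k)) * (fact k * fact k / (real (2*k+1) * fact (2*k)))"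
    unfolding tau_def int B C F by simp
  also have "\<dots> = 1" using pos by (intro aux_cancel) auto
  finally show ?thesis .
qed

lemma zz_bound:
  fixes b z d :: real
  assumes "b = 0 \<or> b = 1" "\<bar>z - b\<bar> \<le> \<bar>d\<bar>"
  shows "\<bar>z * (1 - z)\<bar> \<le> \<bar>d\<bar> * (1 + \<bar>d\<bar>)"
  using assms(1)
proof
  assume "b = 0"
  hence "\<bar>z\<bar> \<le> \<bar>d\<bar>" "\<bar>1 - z\<bar> \<le> 1 + \<bar>d\<bar>" using assms(2) by auto
  thus ?thesis by (simp add: abs_mult mult_mono)
next
  assume "b = 1"
  hence "\<bar>1 - z\<bar> \<le> \<bar>d\<bar>" "\<bar>z\<bar> \<le> 1 + \<bar>d\<bar>" using assms(2) by auto
  hence "\<bar>z\<bar> * \<bar>1 - z\<bar> \<le> (1 + \<bar>d\<bar>) * \<bar>d\<bar>" by (intro mult_mono) auto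
  thus ?thesis by (simp add: abs_mult mult.commute)
qed

lemma tau_dev:
  fixes b d :: real
  assumes b: "b = 0 \<or> b = 1"
  shows "\<bar>tau k (b + d) - b\<bar> \<le> real (2*k+1) * real ((2*k) choose k) * \<bar>d\<bar> * (\<bar>d\<bar> * (1 + \<bar>d\<bar>))^k"
proof -
  define c where "c = real (2*k+1) * real ((2*k) choose k)"
  have c0: "c \<ge> 0" by (simp add: c_def)
  have tb: "tau k b = b" using b tau_0 tau_1 by auto
  have key: "\<bar>c * (z^k * (1-z)^k)\<bar> \<le> c * (\<bar>d\<bar> * (1 + \<bar>d\<bar>))^k" if "\<bar>z - b\<bar> \<le> \<bar>d\<bar>" for z
  proof -
    have "\<bar>z^k * (1-z)^k\<bar> = \<bar>z * (1-z)\<bar>^k" by (simp add: abs_mult power_abs power_mult_distrib)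
    also have "\<dots> \<le> (\<bar>d\<bar> * (1 + \<bar>d\<bar>))^k" by (intro power_mono zz_bound[OF b that]) auto
    finally show ?thesis using c0 by (simp add: abs_mult mult_left_mono)
  qed
  have der: "\<And>x. DERIV (tau k) x :> c * (x^k * (1-x)^k)" unfolding c_def by (rule tau_deriv)
  consider "d = 0" | "d > 0" | "d < 0" by linarith
  thus ?thesis
  proof cases
    case 1 thus ?thesis using tb by simp
  next
    case 2
    then obtain z where z: "b < z" "z < b + d" "tau k (b+d) - tau k b = (b + d - b) * (c * (z^k * (1-z)^k))"
      using MVT2[of b "b+d" "tau k" "\<lambda>x. c * (x^k * (1-x)^k)"] der by auto
    have "\<bar>z - b\<bar> \<le> \<bar>d\<bar>" using z by auto
    from key[OF this] have "\<bar>d\<bar> * \<bar>c * (z^k * (1-z)^k)\<bar> \<le> \<bar>d\<bar> * (c * (\<bar>d\<bar> * (1 + \<bar>d\<bar>))^k)"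
      by (simp add: mult_left_mono)
    moreover have "\<bar>tau k (b + d) - b\<bar> = \<bar>d\<bar> * \<bar>c * (z^k * (1-z)^k)\<bar>"
      using z(3) tb by (simp add: abs_mult)
    moreover have "\<bar>d\<bar> * (c * (\<bar>d\<bar> * (1 + \<bar>d\<bar>))^k) = c * \<bar>d\<bar> * (\<bar>d\<bar> * (1 + \<bar>d\<bar>))^k"
      by (simp only: mult.left_commute[of "\<bar>d\<bar>" c] mult.assoc)
    ultimately show ?thesis unfolding c_def[symmetric] by linarith
  next
    case 3
    then obtain z where z: "b + d < z" "z < b" "tau k b - tau k (b+d) = (b - (b + d)) * (c * (z^k * (1-z)^k))"
      using MVT2[of "b+d" b "tau k" "\<lambda>x. c * (x^k * (1-x)^k)"] der by auto
    have "\<bar>z - b\<bar> \<le> \<bar>d\<bar>" using z by auto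
    from key[OF this] have "\<bar>d\<bar> * \<bar>c * (z^k * (1-z)^k)\<bar> \<le> \<bar>d\<bar> * (c * (\<bar>d\<bar> * (1 + \<bar>d\<bar>))^k)"
      by (simp add: mult_left_mono)
    moreover have "\<bar>tau k (b + d) - b\<bar> = \<bar>d\<bar> * \<bar>c * (z^k * (1-z)^k)\<bar>"
      using z(3) tb by (simp add: abs_mult abs_minus_commute)
    moreover have "\<bar>d\<bar> * (c * (\<bar>d\<bar> * (1 + \<bar>d\<bar>))^k) = c * \<bar>d\<bar> * (\<bar>d\<bar> * (1 + \<bar>d\<bar>))^k"
      by (simp only: mult.left_commute[of "\<bar>d\<bar>" c] mult.assoc)
    ultimately show ?thesis unfolding c_def[symmetric] by linarith
  qed
qed



lemma exp_ge_2x: "exp (y::real) \<ge> 2 * y"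
proof (cases "y \<ge> 0")
  case True
  have "exp y \<ge> 1 + y + y^2/2" using exp_lower_Taylor_quadratic[OF True] by simp
  moreover have e: "(y-1)^2 = y^2 - 2*y + 1" by (simp add: power2_eq_square algebra_simps)
  moreover have "(y-1)^2 \<ge> 0" by (rule zero_le_power2)
  ultimately show ?thesis by linarith
next
  case False
  have "exp y > 0" by simp
  thus ?thesis using False by linarith
qed

lemma sq_le_exp:
  fixes x r :: real assumes "x \<ge> 0" "r > 0"
  shows "x^2 \<le> r^2 / 256 * exp (16 * x / r)"
proof -
  have h: "2 * (8*x/r) \<le> exp (8*x/r)" by (rule exp_ge_2x)
  have "x = r/16 * (2 * (8*x/r))" using assms by simp
  also have "\<dots> \<le> r/16 * exp (8*x/r)" using h assms by (intro mult_left_mono) auto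
  finally have "x \<le> r / 16 * exp (8*x/r)" .
  hence "x^2 \<le> (r / 16 * exp (8*x/r))^2" using assms by (intro power_mono) auto
  also have "\<dots> = r^2 / 256 * (exp (8*x/r) * exp (8*x/r))"
    by (simp add: power2_eq_square)
  also have "exp (8*x/r) * exp (8*x/r) = exp (16 * x / r)"
    by (simp flip: exp_add)
  finally show ?thesis .
qed

lemma poly_rearr: "((c::real) * x * (x * (1 + x)) ^ k)^2 = c^2 * (x^2)^(k+1) * ((1+x)^2)^k"
  by (simp add: power_mult_distrib power2_eq_square power_add mult_ac)

lemma tau_exp_bound:
  fixes b d r :: real
  assumes b: "b = 0 \<or> b = 1" and r: "0 < r" "r \<le> 1"
  shows "(tau k (b+d) - b)^2 \<le> real(2*k+1)^2 * r^(2*k) / (256 * 16^k) * exp (18*real (k+1)/r * \<bar>d\<bar>)"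
proof -
  define x where "x = \<bar>d\<bar>"
  define c where "c = real (2*k+1) * real ((2*k) choose k)"
  define D where "D = real (2*k+1)"
  have x0: "x \<ge> 0" by (simp add: x_def)
  have c0: "c \<ge> 0" by (simp add: c_def)
  have ch: "real ((2*k) choose k) \<le> 4^k"
  proof -
    have "(2*k) choose k \<le> 2^(2*k)" by (rule binomial_le_pow2)
    hence "real ((2*k) choose k) \<le> 2^(2*k)" by (metis of_nat_le_iff of_nat_numeral of_nat_power)
    also have "(2::real)^(2*k) = 4^k" by (simp add: power_mult)
    finally show ?thesis .
  qed
  have cD: "c \<le> D * 4^k" unfolding c_def D_def using ch by (intro mult_left_mono) auto
  have c2: "c^2 \<le> D^2 * 16^k"
  proof -
    have "c^2 \<le> (D * 4^k)^2" using cD c0 by (intro power_mono) auto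
    also have "\<dots> = D^2 * (4^k * 4^k)" by (simp add: power2_eq_square)
    also have "(4::real)^k * 4^k = 16^k" by (simp flip: power_mult_distrib)
    finally show ?thesis .
  qed
  have "\<bar>tau k (b+d) - b\<bar> \<le> c * x * (x * (1 + x))^k"
    using tau_dev[OF b, of k d] unfolding c_def x_def .
  hence "\<bar>tau k (b+d) - b\<bar>^2 \<le> (c * x * (x * (1 + x))^k)^2"
    by (intro power_mono) auto
  hence 1: "(tau k (b+d) - b)^2 \<le> c^2 * (x^2)^(k+1) * ((1+x)^2)^k"
    by (simp only: power2_abs poly_rearr)
  have xe: "(x^2)^(k+1) \<le> (r^2/256 * exp (16*x/r))^(k+1)"
    using sq_le_exp[OF x0 r(1)] by (intro power_mono) auto
  have ye: "((1+x)^2)^k \<le> (exp (2*x))^k"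
  proof -
    have "1 + x \<le> exp x" by (rule exp_ge_add_one_self)
    hence "(1+x)^2 \<le> (exp x)^2" using x0 by (intro power_mono) auto
    also have "(exp x)^2 = exp (2*x)" by (simp add: power2_eq_square flip: exp_add)
    finally show ?thesis using x0 by (intro power_mono) auto
  qed
  define K1 where "K1 = real (k+1)"
  have K1: "real k \<le> K1" "K1 \<ge> 1" by (auto simp: K1_def)
  have E1: "(exp (16*x/r))^(k+1) * (exp (2*x))^k = exp ((16*K1/r + 2*real k) * x)"
  proof -
    have "(exp (16*x/r))^(k+1) = exp (K1 * (16*x/r))" unfolding K1_def by (rule exp_of_nat_mult[symmetric])
    moreover have "(exp (2*x))^k = exp (real k * (2*x))" by (rule exp_of_nat_mult[symmetric])
    moreover have "K1 * (16*x/r) + real k * (2*x) = (16*K1/r + 2*real k) * x"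
      by (simp add: algebra_simps)
    ultimately show ?thesis by (simp flip: exp_add)
  qed
  have E2: "16^k * (r^2/256)^(k+1) = r^(2*k) * r^2 / (256 * 16^k)"
  proof -
    have p1: "(256::real)^(k+1) = 256 * (16^k * 16^k)" by (simp flip: power_mult_distrib)
    have p2: "(r^2)^(k+1) = r^(2*k) * r^2" by (simp flip: power_mult power_add)
    have "16^k * (r^2/256)^(k+1) = 16^k * (r^2)^(k+1) / 256^(k+1)" by (simp add: power_divide)
    also have "\<dots> = 16^k * (r^(2*k) * r^2) / (256 * (16^k * 16^k))" by (simp only: p1 p2)
    also have "\<dots> = r^(2*k) * r^2 / (256 * 16^k)" by simp
    finally show ?thesis .
  qed
  have E3: "16*K1/r + 2*real k \<le> 18*K1/r"
  proof -
    have "K1 * r \<le> K1 * 1" using r K1 by (intro mult_left_mono) auto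
    hence "K1 \<le> K1 / r" using r by (simp add: le_divide_eq)
    hence "2 * real k \<le> 2 * (K1 / r)" using K1 by linarith
    moreover have "16*K1/r + 2*K1/r = (16*K1 + 2*K1)/r" by (rule add_divide_distrib[symmetric])
    moreover have "16*K1 + 2*K1 = 18*K1" by simp
    ultimately show ?thesis by simp
  qed
  have "c^2 * (x^2)^(k+1) * ((1+x)^2)^k \<le> (D^2 * 16^k) * (r^2/256 * exp (16*x/r))^(k+1) * (exp (2*x))^k"
    using c2 xe ye by (intro mult_mono) (auto intro: mult_nonneg_nonneg)
  also have "\<dots> = D^2 * (16^k * (r^2/256)^(k+1)) * ((exp (16*x/r))^(k+1) * (exp (2*x))^k)"
    by (simp only: power_mult_distrib mult_ac)
  also have "\<dots> = D^2 * (r^(2*k) * r^2 / (256 * 16^k)) * exp ((16*K1/r + 2*real k) * x)"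
    by (simp only: E1 E2)
  also have "\<dots> \<le> D^2 * (r^(2*k) * 1 / (256 * 16^k)) * exp (18*K1/r * x)"
  proof (intro mult_mono mult_left_mono divide_right_mono)
    show "r^2 \<le> 1" using r by (simp add: power_le_one)
    show "exp ((16*K1/r + 2*real k) * x) \<le> exp (18*K1/r * x)"
      by (simp only: exp_le_cancel_iff) (rule mult_right_mono[OF E3 x0])
  qed (auto simp: D_def)
  finally have 2: "c^2 * (x^2)^(k+1) * ((1+x)^2)^k \<le> D^2 * (r^(2*k) * 1 / (256 * 16^k)) * exp (18*K1/r * x)" .
  have 3: "D^2 * (r^(2*k) * 1 / (256 * 16^k)) * exp (18*K1/r * x) =
    real(2*k+1)^2 * r^(2*k) / (256 * 16^k) * exp (18*real (k+1)/r * \<bar>d\<bar>)"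
    unfolding D_def K1_def x_def by simp
  show ?thesis using order.trans[OF 1 2] unfolding 3 .
qed


lemma exp_bind_fin:
  fixes h :: "'b \<Rightarrow> real"
  assumes "finite (set_pmf p)" "\<And>x. x \<in> set_pmf p \<Longrightarrow> finite (set_pmf (f x))"
  shows "measure_pmf.expectation (p \<bind> f) h = measure_pmf.expectation p (\<lambda>x. measure_pmf.expectation (f x) h)"
proof -
  have "measure_pmf.expectation (p \<bind> f) h = (\<Sum>a\<in>set_pmf p. pmf p a *\<^sub>R measure_pmf.expectation (f a) h)"
    by (rule pmf_expectation_bind[OF assms(1) assms(2) subset_refl])
  also have "\<dots> = measure_pmf.expectation p (\<lambda>x. measure_pmf.expectation (f x) h)"
    by (rule integral_measure_pmf[symmetric, OF assms(1)]) auto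
  finally show ?thesis .
qed

lemma fin_Pi_bool:
  assumes "finite A"
  shows "finite (set_pmf (Pi_pmf A (dflt::bool) p))"
  unfolding set_Pi_pmf[OF assms] using assms by (intro finite_PiE_dflt) auto

lemma finite_edges: "finite {(i,j). 1\<le>i \<and> i<j \<and> j\<le>(n::nat)}"
  by (rule finite_subset[of _ "{1..n}\<times>{1..n}"]) auto

lemma fin_vertices: "finite (set_pmf (pds_vertices n \<rho>))"
  unfolding pds_vertices_def by (rule fin_Pi_bool) simp

lemma fin_edges: "finite (set_pmf (pds_edges n q0 q1 v))"
  unfolding pds_edges_def by (rule fin_Pi_bool[OF finite_edges])

lemma expectation_pds:
  fixes g :: "(nat \<Rightarrow> bool) \<times> (nat \<times> nat \<Rightarrow> bool) \<Rightarrow> real"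
  shows "measure_pmf.expectation (pds n \<rho> q0 q1) g =
    measure_pmf.expectation (pds_vertices n \<rho>) (\<lambda>v. measure_pmf.expectation (pds_edges n q0 q1 v) (\<lambda>Y. g (v, Y)))"
proof -
  have "measure_pmf.expectation (pds n \<rho> q0 q1) g =
    measure_pmf.expectation (pds_vertices n \<rho>) (\<lambda>v. measure_pmf.expectation (pds_edges n q0 q1 v \<bind> (\<lambda>Y. return_pmf (v, Y))) g)"
    unfolding pds_def
    by (rule exp_bind_fin[OF fin_vertices]) (simp add: fin_edges)
  also have "\<dots> = measure_pmf.expectation (pds_vertices n \<rho>) (\<lambda>v. measure_pmf.expectation (pds_edges n q0 q1 v) (\<lambda>Y. g (v, Y)))"
  proof (rule Bochner_Integration.integral_cong[OF refl])
    fix v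
    show "measure_pmf.expectation (pds_edges n q0 q1 v \<bind> (\<lambda>Y. return_pmf (v, Y))) g =
          measure_pmf.expectation (pds_edges n q0 q1 v) (\<lambda>Y. g (v, Y))"
      by (subst exp_bind_fin[OF fin_edges]) auto
  qed
  finally show ?thesis .
qed

lemma prod_I:
  "(\<Prod>e\<in>{(i,j). 1\<le>i \<and> i<j \<and> j\<le>n}. if fst e = (1::nat) then w e else 1) = (\<Prod>j\<in>{2..n}. (w (1,j) :: real))"
proof -
  have "(\<Prod>e\<in>{(i,j). 1\<le>i \<and> i<j \<and> j\<le>n}. if fst e = (1::nat) then w e else 1) =
        (\<Prod>e\<in>{e\<in>{(i,j). 1\<le>i \<and> i<j \<and> j\<le>n}. fst e = 1}. w e)"
    by (rule prod.inter_filter[OF finite_edges, symmetric])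
  also have "{e\<in>{(i,j). 1\<le>i \<and> i<j \<and> j\<le>n}. fst e = 1} = Pair 1 ` {2..n}"
    by (auto simp: image_iff)
  also have "(\<Prod>e\<in>Pair 1 ` {2..n}. w e) = (\<Prod>j\<in>{2..n}. w (1,j))"
    by (subst prod.reindex) (auto simp: inj_on_def)
  finally show ?thesis .
qed

definition Sdeg :: "nat \<Rightarrow> (nat \<times> nat \<Rightarrow> bool) \<Rightarrow> real" where
  "Sdeg n Y = (\<Sum>j=2..n. of_bool (Y (1, j)))"

lemma edges_mgf:
  assumes q: "0 \<le> q0" "q0 \<le> q1" "q1 \<le> 1"
  shows "measure_pmf.expectation (pds_edges n q0 q1 v) (\<lambda>Y. exp (t * Sdeg n Y)) =
    (\<Prod>j\<in>{2..n}. 1 + (q0 + (q1 - q0) * (of_bool (v 1) * of_bool (v j))) * (exp t - 1))"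
proof -
  define I where "I = {(i,j). 1\<le>i \<and> i<j \<and> j\<le>(n::nat)}"
  define g where "g e y = (if fst e = (1::nat) then exp (t * of_bool y) else (1::real))" for e :: "nat \<times> nat" and y :: bool
  define \<pi> where "\<pi> = (\<lambda>(i::nat, j::nat). q0 + (q1 - q0) * (of_bool (v i) * of_bool (v j)))"
  have finI: "finite I" unfolding I_def by (rule finite_edges)
  have \<pi>01: "0 \<le> \<pi> e \<and> \<pi> e \<le> 1" for e
  proof -
    obtain i j where e: "e = (i,j)" by (cases e)
    show ?thesis using q unfolding e \<pi>_def by (cases "v i"; cases "v j") auto
  qed
  have 1: "exp (t * Sdeg n Y) = (\<Prod>e\<in>I. g e (Y e))" for Y
  proof -
    have "exp (t * Sdeg n Y) = (\<Prod>j\<in>{2..n}. exp (t * of_bool (Y (1,j))))"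
      unfolding Sdeg_def sum_distrib_left by (rule exp_sum) simp
    also have "\<dots> = (\<Prod>e\<in>I. g e (Y e))"
      unfolding g_def I_def by (rule prod_I[symmetric])
    finally show ?thesis .
  qed
  have "measure_pmf.expectation (pds_edges n q0 q1 v) (\<lambda>Y. exp (t * Sdeg n Y)) =
        measure_pmf.expectation (Pi_pmf I False (\<lambda>e. bernoulli_pmf (\<pi> e))) (\<lambda>Y. \<Prod>e\<in>I. g e (Y e))"
  proof -
    have pe: "(\<lambda>(i::nat,j::nat). bernoulli_pmf (q0 + (q1 - q0) * (of_bool (v i) * of_bool (v j)))) = (\<lambda>e. bernoulli_pmf (\<pi> e))"
      unfolding \<pi>_def by (rule ext) (simp split: prod.split)
    show ?thesis unfolding 1 pds_edges_def I_def pe ..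
  qed
  also have "\<dots> = (\<Prod>e\<in>I. measure_pmf.expectation (bernoulli_pmf (\<pi> e)) (g e))"
    by (rule expectation_prod_Pi_pmf[OF finI]) (auto simp: g_def integrable_measure_pmf_finite)
  also have "\<dots> = (\<Prod>e\<in>I. if fst e = 1 then 1 + \<pi> e * (exp t - 1) else 1)"
  proof (rule prod.cong[OF refl])
    fix e
    show "measure_pmf.expectation (bernoulli_pmf (\<pi> e)) (g e) = (if fst e = 1 then 1 + \<pi> e * (exp t - 1) else 1)"
      using \<pi>01[of e] by (simp add: g_def algebra_simps)
  qed
  also have "\<dots> = (\<Prod>j\<in>{2..n}. 1 + \<pi> (1,j) * (exp t - 1))"
    unfolding I_def by (rule prod_I)
  finally show ?thesis by (simp add: \<pi>_def)
qed

lemma vert_prod: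
  assumes "0 \<le> \<rho>" "\<rho> \<le> 1" "n \<ge> 1" "\<And>b. h1 b \<ge> 0" "\<And>b. h b \<ge> 0"
  shows "measure_pmf.expectation (pds_vertices n \<rho>) (\<lambda>v. h1 (v 1) * (\<Prod>j\<in>{2..n}. h (v j))) =
    (\<rho> * h1 True + (1-\<rho>) * h1 False) * (\<rho> * h True + (1-\<rho>) * h False)^(n-1)"
proof -
  define f where "f i = (if i = (1::nat) then h1 else h)" for i
  have ins: "{1..n} = insert 1 {2..n}" using assms(3) by auto
  have 1: "h1 (v 1) * (\<Prod>j\<in>{2..n}. h (v j)) = (\<Prod>i\<in>{1..n}. f i (v i))" for v :: "nat \<Rightarrow> bool"
  proof -
    have "(\<Prod>i\<in>{1..n}. f i (v i)) = f 1 (v 1) * (\<Prod>i\<in>{2..n}. f i (v i))"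
      unfolding ins by (subst prod.insert) auto
    also have "(\<Prod>i\<in>{2..n}. f i (v i)) = (\<Prod>j\<in>{2..n}. h (v j))"
      by (rule prod.cong) (auto simp: f_def)
    finally show ?thesis by (simp add: f_def)
  qed
  have "measure_pmf.expectation (pds_vertices n \<rho>) (\<lambda>v. h1 (v 1) * (\<Prod>j\<in>{2..n}. h (v j))) =
        measure_pmf.expectation (Pi_pmf {1..n} False (\<lambda>_. bernoulli_pmf \<rho>)) (\<lambda>v. \<Prod>i\<in>{1..n}. f i (v i))"
    unfolding 1 pds_vertices_def ..
  also have "\<dots> = (\<Prod>i\<in>{1..n}. measure_pmf.expectation (bernoulli_pmf \<rho>) (f i))"
    by (rule expectation_prod_Pi_pmf) (auto simp: integrable_measure_pmf_finite f_def assms)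
  also have "\<dots> = measure_pmf.expectation (bernoulli_pmf \<rho>) (f 1) * (\<Prod>i\<in>{2..n}. measure_pmf.expectation (bernoulli_pmf \<rho>) (f i))"
    unfolding ins by (subst prod.insert) auto
  also have "(\<Prod>i\<in>{2..n}. measure_pmf.expectation (bernoulli_pmf \<rho>) (f i)) = (\<Prod>i\<in>{2..n}. \<rho> * h True + (1-\<rho>) * h False)"
    by (rule prod.cong) (auto simp: f_def assms algebra_simps)
  also have "\<dots> = (\<rho> * h True + (1-\<rho>) * h False)^(n-1)" by simp
  also have "measure_pmf.expectation (bernoulli_pmf \<rho>) (f 1) = \<rho> * h1 True + (1-\<rho>) * h1 False"
    by (simp add: f_def assms algebra_simps)
  finally show ?thesis .
qed



lemma exp_quad:
  fixes t :: real assumes "\<bar>t\<bar> \<le> 1"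
  shows "exp t \<le> 1 + t + t^2"
proof (cases "t \<ge> 0")
  case True thus ?thesis using exp_bound[of t] assms by simp
next
  case False
  define s where "s = -t"
  have s: "0 < s" "s \<le> 1" using False assms by (auto simp: s_def)
  have "1 + s \<le> exp s" by (rule exp_ge_add_one_self)
  hence "exp t \<le> 1 / (1 + s)" using s by (simp add: s_def exp_minus field_simps)
  also have "1 / (1 + s) \<le> 1 - s + s^2"
  proof -
    have "(1 + s) * (1 - s + s^2) = 1 + s^3" by (simp add: algebra_simps power2_eq_square power3_eq_cube)
    moreover have "s^3 \<ge> 0" using s by simp
    ultimately have "1 \<le> (1 + s) * (1 - s + s^2)" by linarith
    thus ?thesis using s by (simp add: divide_le_eq mult.commute)
  qed
  finally show ?thesis by (simp add: s_def)
qed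

lemma chernoff_core:
  fixes p t :: real and m :: nat
  assumes p: "0 \<le> p" "p \<le> 1" and t: "\<bar>t\<bar> \<le> 1"
  shows "exp (- t * real m * p) * (1 + p * (exp t - 1))^m \<le> exp (real m * p * t^2)"
proof -
  have b0: "0 \<le> 1 + p * (exp t - 1)"
  proof -
    have "1 + p * (exp t - 1) = (1 - p) + p * exp t" by (simp add: algebra_simps)
    moreover have "0 \<le> p * exp t" using p by simp
    ultimately show ?thesis using p by linarith
  qed
  have "(1 + p * (exp t - 1))^m \<le> (exp (p * (exp t - 1)))^m"
    using b0 by (intro power_mono exp_ge_add_one_self) auto
  also have "\<dots> = exp (real m * (p * (exp t - 1)))" by (rule exp_of_nat_mult[symmetric])
  finally have 1: "exp (- t * real m * p) * (1 + p * (exp t - 1))^m \<le> exp (- t * real m * p) * exp (real m * (p * (exp t - 1)))"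
    by (intro mult_left_mono) auto
  have "exp t - 1 \<le> t + t^2" using exp_quad[OF t] by linarith
  hence "real m * p * (exp t - 1) \<le> real m * p * (t + t^2)" using p by (intro mult_left_mono) auto
  hence "- t * real m * p + real m * (p * (exp t - 1)) \<le> real m * p * t^2" by (simp add: algebra_simps)
  hence "exp (- t * real m * p) * exp (real m * (p * (exp t - 1))) \<le> exp (real m * p * t^2)"
    by (simp flip: exp_add)
  with 1 show ?thesis by linarith
qed

lemma mgf_total:
  fixes t :: real
  assumes n: "n \<ge> 2" and rho: "0 \<le> \<rho>" "\<rho> \<le> 1" and q: "0 \<le> q0" "q0 \<le> q1" "q1 \<le> 1"
    and t: "\<bar>t\<bar> \<le> 1"
  shows "measure_pmf.expectation (pds n \<rho> q0 q1)
      (\<lambda>x. exp (t * (Sdeg n (snd x) - real (n-1) * (q0 + of_bool (fst x 1) * (q1 - q0) * \<rho>))))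
    \<le> exp (real (n-1) * (q0 + (q1 - q0) * \<rho>) * t^2)"
proof -
  define N where "N = real (n-1)"
  define p1 where "p1 = q0 + (q1 - q0) * \<rho>"
  define h1 where "h1 b = of_bool b * exp (- t * N * p1)" for b
  define h where "h b = 1 + (q0 + (q1 - q0) * of_bool b) * (exp t - 1)" for b
  define h1' where "h1' b = of_bool (\<not> b) * (exp (- t * N * q0) * (1 + q0 * (exp t - 1))^(n-1))" for b
  have et: "exp t > 0" by simp
  have h0: "h b \<ge> 0" for b
  proof -
    have "h b = (1 - (q0 + (q1 - q0) * of_bool b)) + (q0 + (q1 - q0) * of_bool b) * exp t"
      by (simp add: h_def algebra_simps)
    moreover have "0 \<le> q0 + (q1 - q0) * of_bool b" "q0 + (q1 - q0) * of_bool b \<le> 1" using q by (cases b; simp)+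
    ultimately show ?thesis using et by (metis add_nonneg_nonneg diff_ge_0_iff_ge mult_nonneg_nonneg less_imp_le)
  qed
  have q01: "0 \<le> q0" "q0 \<le> 1" using q by auto
  have h1'0: "h1' b \<ge> 0" for b
  proof -
    have "0 \<le> 1 + q0 * (exp t - 1)"
    proof -
      have "1 + q0 * (exp t - 1) = (1 - q0) + q0 * exp t" by (simp add: algebra_simps)
      thus ?thesis using q01 et by (metis add_nonneg_nonneg diff_ge_0_iff_ge mult_nonneg_nonneg less_imp_le)
    qed
    thus ?thesis unfolding h1'_def by simp
  qed
  have inner: "measure_pmf.expectation (pds_edges n q0 q1 v)
      (\<lambda>Y. exp (t * (Sdeg n Y - N * (q0 + of_bool (v 1) * (q1 - q0) * \<rho>))))
    = h1 (v 1) * (\<Prod>j\<in>{2..n}. h (v j)) + h1' (v 1) * (\<Prod>j\<in>{2..n}. (\<lambda>_. 1) (v j))" for v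
  proof -
    have "measure_pmf.expectation (pds_edges n q0 q1 v)
      (\<lambda>Y. exp (t * (Sdeg n Y - N * (q0 + of_bool (v 1) * (q1 - q0) * \<rho>))))
      = measure_pmf.expectation (pds_edges n q0 q1 v)
      (\<lambda>Y. exp (- t * N * (q0 + of_bool (v 1) * (q1 - q0) * \<rho>)) * exp (t * Sdeg n Y))"
      by (simp add: algebra_simps flip: exp_add)
    also have "\<dots> = exp (- t * N * (q0 + of_bool (v 1) * (q1 - q0) * \<rho>)) *
        measure_pmf.expectation (pds_edges n q0 q1 v) (\<lambda>Y. exp (t * Sdeg n Y))"
      by (rule integral_mult_right_zero)
    also have "\<dots> = exp (- t * N * (q0 + of_bool (v 1) * (q1 - q0) * \<rho>)) *
        (\<Prod>j\<in>{2..n}. 1 + (q0 + (q1 - q0) * (of_bool (v 1) * of_bool (v j))) * (exp t - 1))"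
      by (simp only: edges_mgf[OF q])
    also have "\<dots> = h1 (v 1) * (\<Prod>j\<in>{2..n}. h (v j)) + h1' (v 1) * (\<Prod>j\<in>{2..n}. (\<lambda>_. 1) (v j))"
    proof (cases "v 1")
      case True
      thus ?thesis by (simp add: h1_def h1'_def h_def p1_def mult_ac)
    next
      case False
      have "(\<Prod>j\<in>{2..n}. 1 + (q0 + (q1 - q0) * (of_bool (v 1) * of_bool (v j))) * (exp t - 1)) = (1 + q0 * (exp t - 1))^(n-1)"
        using False by simp
      thus ?thesis using False by (simp add: h1_def h1'_def)
    qed
    finally show ?thesis .
  qed
  have "measure_pmf.expectation (pds n \<rho> q0 q1)
      (\<lambda>x. exp (t * (Sdeg n (snd x) - real (n-1) * (q0 + of_bool (fst x 1) * (q1 - q0) * \<rho>))))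
    = measure_pmf.expectation (pds_vertices n \<rho>) (\<lambda>v. h1 (v 1) * (\<Prod>j\<in>{2..n}. h (v j)) + h1' (v 1) * (\<Prod>j\<in>{2..n}. (\<lambda>_. 1) (v j)))"
    unfolding expectation_pds by (simp only: fst_conv snd_conv N_def[symmetric] inner)
  also have "\<dots> = measure_pmf.expectation (pds_vertices n \<rho>) (\<lambda>v. h1 (v 1) * (\<Prod>j\<in>{2..n}. h (v j)))
      + measure_pmf.expectation (pds_vertices n \<rho>) (\<lambda>v. h1' (v 1) * (\<Prod>j\<in>{2..n}. (\<lambda>_. 1) (v j)))"
    by (rule Bochner_Integration.integral_add) (auto intro: integrable_measure_pmf_finite fin_vertices)
  also have "\<dots> = (\<rho> * h1 True + (1-\<rho>) * h1 False) * (\<rho> * h True + (1-\<rho>) * h False)^(n-1)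
       + (\<rho> * h1' True + (1-\<rho>) * h1' False) * (\<rho> * 1 + (1-\<rho>) * 1)^(n-1)"
  proof -
    have e1: "measure_pmf.expectation (pds_vertices n \<rho>) (\<lambda>v. h1 (v 1) * (\<Prod>j\<in>{2..n}. h (v j))) =
      (\<rho> * h1 True + (1-\<rho>) * h1 False) * (\<rho> * h True + (1-\<rho>) * h False)^(n-1)"
      by (rule vert_prod[of \<rho> n h1 h]) (use n rho h0 in \<open>auto simp: h1_def\<close>)
    have e2: "measure_pmf.expectation (pds_vertices n \<rho>) (\<lambda>v. h1' (v 1) * (\<Prod>j\<in>{2..n}. (\<lambda>_. 1) (v j))) =
      (\<rho> * h1' True + (1-\<rho>) * h1' False) * (\<rho> * 1 + (1-\<rho>) * 1)^(n-1)"
      by (rule vert_prod[of \<rho> n h1' "\<lambda>_. 1"]) (use n rho h1'0 in auto)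
    show ?thesis by (simp only: e1 e2)
  qed
  also have "\<dots> = \<rho> * (exp (- t * N * p1) * (1 + p1 * (exp t - 1))^(n-1)) + (1-\<rho>) * (exp (- t * N * q0) * (1 + q0 * (exp t - 1))^(n-1))"
  proof -
    have "\<rho> * h True + (1-\<rho>) * h False = 1 + p1 * (exp t - 1)" by (simp add: h_def p1_def algebra_simps)
    thus ?thesis by (simp add: h1_def h1'_def)
  qed
  also have "\<dots> \<le> \<rho> * exp (N * p1 * t^2) + (1-\<rho>) * exp (N * q0 * t^2)"
  proof -
    have p1r: "0 \<le> p1" "p1 \<le> 1"
    proof -
      have "(q1 - q0) * \<rho> \<le> (q1 - q0) * 1" using q rho by (intro mult_left_mono) auto
      moreover have "0 \<le> (q1 - q0) * \<rho>" using q rho by simp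
      ultimately show "0 \<le> p1" "p1 \<le> 1" using q by (auto simp: p1_def)
    qed
    show ?thesis unfolding N_def using chernoff_core[OF p1r t, of "n-1"] chernoff_core[OF q01 t, of "n-1"] rho
      by (intro add_mono mult_left_mono) auto
  qed
  also have "\<dots> \<le> \<rho> * exp (N * p1 * t^2) + (1-\<rho>) * exp (N * p1 * t^2)"
  proof -
    have "q0 \<le> p1" using q rho by (simp add: p1_def)
    hence "N * q0 * t^2 \<le> N * p1 * t^2" by (intro mult_right_mono mult_left_mono) (auto simp: N_def)
    thus ?thesis using rho by (intro add_mono mult_left_mono) auto
  qed
  also have "\<dots> = exp (real (n-1) * (q0 + (q1 - q0) * \<rho>) * t^2)" by (simp add: N_def p1_def algebra_simps)
  finally show ?thesis .
qed



theorem mainTheorem13: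
  fixes n k :: nat and \<rho> q0 q1 r :: real
  assumes n: "n \<ge> 2"
    and rho: "0 < \<rho>" "\<rho> \<le> 1/2"
    and q: "0 < q0" "q0 < q1" "q1 < 1"
    and r: "0 < r" "r < 1"
    and h1: "(q1 - q0)^2 / q0 \<ge> 216 / (r^2 * \<rho>^2 * real (n - 1)) *
               (ln 4 + 3 * real (2*k+1) * ln (9 / min \<rho> (min q0 (1 - q1))))"
    and h2: "q1 * \<rho> \<ge> 864 / (r^2 * real (n - 1)) *
               (ln 4 + 3 * real (2*k+1) * ln (9 / min \<rho> (min q0 (1 - q1))))"
  shows "measure_pmf.expectation (pds n \<rho> q0 q1)
           (\<lambda>(v, Y). (tau k (1 / ((q1 - q0) * \<rho>) *
                 (1 / real (n - 1) * (\<Sum>i=2..n. of_bool (Y (1, i))) - q0))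
               - of_bool (v 1))^2)
         \<le> real (2*k+1)^2 * r ^ (2*k)"
proof -
  define N where "N = real (n-1)"
  define \<Delta> where "\<Delta> = q1 - q0"
  define \<nu> where "\<nu> = min \<rho> (min q0 (1 - q1))"
  define L where "L = ln 4 + 3 * real (2*k+1) * ln (9 / \<nu>)"
  define a where "a = 18 * real (k+1) / r"
  define X where "X = N * \<Delta> * \<rho>"
  define \<mu> where "\<mu> = a / X"
  define K where "K = real(2*k+1)^2 * r^(2*k) / (256 * 16^k)"
  define p1 where "p1 = q0 + \<Delta> * \<rho>"
  have N1: "N \<ge> 1" using n by (simp add: N_def)
  have D0: "\<Delta> > 0" using q by (simp add: \<Delta>_def)
  have nz: "r \<noteq> 0" "\<rho> \<noteq> 0" "N \<noteq> 0" "q0 \<noteq> 0" "\<Delta> \<noteq> 0" using r rho N1 q D0 by auto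
  have X0: "X > 0" using N1 D0 rho by (simp add: X_def)
  have nu0: "\<nu> > 0" using rho q by (simp add: \<nu>_def)
  have "\<nu> \<le> \<rho>" by (simp add: \<nu>_def)
  hence nu1: "\<nu> \<le> 1/2" using rho by linarith
  have lnnu: "ln (9 / \<nu>) \<ge> 1"
  proof -
    have "9 / \<nu> \<ge> 18" using nu0 nu1 by (simp add: field_simps)
    moreover have "exp 1 \<le> (3::real)" by (rule exp_le)
    ultimately have "exp 1 \<le> 9 / \<nu>" by linarith
    thus ?thesis using nu0 by (simp add: ln_ge_iff)
  qed
  have L3: "L \<ge> 3 * real (2*k+1)"
  proof -
    have "3 * real (2*k+1) * 1 \<le> 3 * real (2*k+1) * ln (9 / \<nu>)" using lnnu by (intro mult_left_mono) auto
    moreover have "ln (4::real) \<ge> 0" by simp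
    ultimately show ?thesis unfolding L_def by linarith
  qed
  have L0: "L > 0" using L3 by simp
  have H1: "216 * L * q0 \<le> \<Delta>^2 * r^2 * \<rho>^2 * N"
  proof -
    have pos: "q0 * (r^2 * \<rho>^2 * N) > 0" using q r rho N1 by simp
    have "216 / (r^2 * \<rho>^2 * N) * L \<le> \<Delta>^2 / q0" using h1 unfolding \<Delta>_def N_def L_def \<nu>_def .
    hence "216 / (r^2 * \<rho>^2 * N) * L * (q0 * (r^2 * \<rho>^2 * N)) \<le> \<Delta>^2 / q0 * (q0 * (r^2 * \<rho>^2 * N))"
      using pos by (intro mult_right_mono) auto
    moreover have "216 / (r^2 * \<rho>^2 * N) * L * (q0 * (r^2 * \<rho>^2 * N)) = 216 * L * q0" using pos nz by (simp add: field_simps)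
    moreover have "\<Delta>^2 / q0 * (q0 * (r^2 * \<rho>^2 * N)) = \<Delta>^2 * r^2 * \<rho>^2 * N" using pos nz by (simp add: field_simps)
    ultimately show ?thesis by simp
  qed
  have H2: "864 * L \<le> q1 * \<rho> * r^2 * N"
  proof -
    have pos: "r^2 * N > 0" using r N1 by simp
    have "864 / (r^2 * N) * L \<le> q1 * \<rho>" using h2 unfolding N_def L_def \<nu>_def .
    hence "864 / (r^2 * N) * L * (r^2 * N) \<le> q1 * \<rho> * (r^2 * N)"
      using pos by (intro mult_right_mono) auto
    moreover have "864 / (r^2 * N) * L * (r^2 * N) = 864 * L" using pos nz by (simp add: field_simps)
    ultimately show ?thesis by (simp add: mult_ac)
  qed
  have HA: "216 * L \<le> r^2 * X"
  proof (cases "\<Delta> \<ge> q0")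
    case True
    have "q1 \<le> 2 * \<Delta>" using True by (simp add: \<Delta>_def)
    hence "q1 * (\<rho> * r^2 * N) \<le> 2 * \<Delta> * (\<rho> * r^2 * N)" using rho r N1 by (intro mult_right_mono) auto
    hence "864 * L \<le> 2 * (r^2 * X)" using H2 by (simp add: X_def mult_ac)
    thus ?thesis using L0 by linarith
  next
    case False
    have "216 * L * \<Delta> \<le> 216 * L * q0" using False L0 by (intro mult_left_mono) auto
    also have "\<dots> \<le> \<Delta>^2 * r^2 * \<rho>^2 * N" by (rule H1)
    also have "\<dots> = \<Delta> * (r^2 * (N * \<Delta> * \<rho>) * \<rho>)" by (simp add: power2_eq_square mult_ac)
    finally have "216 * L * \<Delta> \<le> \<Delta> * (r^2 * X * \<rho>)" by (simp add: X_def)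
    hence "216 * L \<le> r^2 * X * \<rho>" using D0 by (simp add: mult.commute)
    also have "\<dots> \<le> r^2 * X * 1" using rho r X0 by (intro mult_left_mono) auto
    finally show ?thesis by simp
  qed
  have mu0: "\<mu> \<ge> 0" using X0 r by (simp add: \<mu>_def a_def)
  have mu1: "\<mu> \<le> 1"
  proof -
    have "a * r^2 = 18 * real (k+1) * r" using r by (simp add: a_def power2_eq_square)
    also have "\<dots> \<le> 18 * real (k+1) * 1" using r by (intro mult_left_mono) auto
    also have "\<dots> \<le> 216 * L" using L3 by simp
    also have "\<dots> \<le> r^2 * X" by (rule HA)
    finally have "a \<le> X" using r by (simp add: mult.commute)
    thus ?thesis using X0 by (simp add: \<mu>_def)
  qed
  have B: "N * p1 * \<mu>^2 \<le> real (k+1)"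
  proof -
    have X2: "N * \<Delta> * \<rho> = X" by (simp add: X_def)
    have e: "N * p1 * \<mu>^2 = a^2 * (N * q0 / X^2) + a^2 / X"
    proof -
      have "N * p1 * \<mu>^2 = a^2 * (N * q0 / X^2) + a^2 * (N * \<Delta> * \<rho> / X^2)"
        unfolding p1_def \<mu>_def using X0 by (simp add: field_simps power2_eq_square)
      also have "N * \<Delta> * \<rho> / X^2 = 1 / X" unfolding X2 using X0 by (simp add: power2_eq_square)
      finally show ?thesis by simp
    qed
    have b1: "N * q0 / X^2 \<le> r^2 / (216 * L)"
    proof -
      have "N * q0 * (216 * L) \<le> N * (\<Delta>^2 * r^2 * \<rho>^2 * N)" using H1 N1 by (simp add: mult_ac)
      also have "\<dots> = r^2 * X^2" by (simp add: X_def power2_eq_square mult_ac)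
      finally show ?thesis using X0 L0 by (simp add: field_simps)
    qed
    have b2: "1 / X \<le> r^2 / (216 * L)" using HA X0 L0 by (simp add: field_simps)
    have c1: "a^2 * (N * q0 / X^2) \<le> a^2 * (r^2 / (216 * L))" by (rule mult_left_mono[OF b1]) simp
    have c2: "a^2 * (1 / X) \<le> a^2 * (r^2 / (216 * L))" by (rule mult_left_mono[OF b2]) simp
    have c3: "a^2 / X = a^2 * (1 / X)" by simp
    have "N * p1 * \<mu>^2 \<le> a^2 * (r^2 / (216 * L)) + a^2 * (r^2 / (216 * L))"
      using e c1 c2 c3 by linarith
    also have "\<dots> = (a * r)^2 / (108 * L)" using L0 by (simp add: power_mult_distrib field_simps)
    also have "a * r = 18 * real (k+1)" using nz by (simp add: a_def)
    also have "(18 * real (k+1))^2 / (108 * L) = 3 * real (k+1) * real (k+1) / L"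
    proof -
      define kk where "kk = real (k+1)"
      have "(18 * kk)^2 / (108 * L) = 3 * kk * kk / L" using L0 by (simp add: power2_eq_square field_simps)
      thus ?thesis unfolding kk_def .
    qed
    also have "\<dots> \<le> 3 * real (k+1) * real (k+1) / (3 * real (k+1))"
    proof (rule divide_left_mono)
      show "3 * real (k+1) \<le> L" using L3 by simp
    qed (use L0 in auto)
    also have "\<dots> = real (k+1)" by simp
    finally show ?thesis .
  qed
  define \<Phi> where "\<Phi> t (x :: (nat \<Rightarrow> bool) \<times> (nat \<times> nat \<Rightarrow> bool)) = exp (t * (Sdeg n (snd x) - real (n-1) * (q0 + of_bool (fst x 1) * (q1 - q0) * \<rho>)))" for t x
  have pt: "(tau k (1 / ((q1 - q0) * \<rho>) * (1 / real (n - 1) * (\<Sum>i=2..n. of_bool (Y (1, i))) - q0)) - of_bool (v 1))^2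
      \<le> K * (\<Phi> \<mu> (v, Y) + \<Phi> (-\<mu>) (v, Y))" for v Y
  proof -
    define b where "b = (of_bool (v 1) :: real)"
    define S where "S = Sdeg n Y"
    define w where "w = S - N * (q0 + b * \<Delta> * \<rho>)"
    define d where "d = w / X"
    have b01: "b = 0 \<or> b = 1" by (simp add: b_def)
    have z: "1 / ((q1 - q0) * \<rho>) * (1 / real (n - 1) * (\<Sum>i=2..n. of_bool (Y (1, i))) - q0) = b + d"
    proof -
      have e1: "(\<Sum>i=2..n. of_bool (Y (1, i))) = S" by (simp add: S_def Sdeg_def)
      have "1 / ((q1 - q0) * \<rho>) * (1 / real (n - 1) * S - q0) = b + d"
        unfolding N_def[symmetric] \<Delta>_def[symmetric] d_def w_def X_def using nz by (simp add: field_simps)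
      thus ?thesis unfolding e1 .
    qed
    have "(tau k (b + d) - b)^2 \<le> K * exp (18 * real (k+1) / r * \<bar>d\<bar>)"
      using tau_exp_bound[OF b01 r(1)] r by (simp add: K_def)
    also have "18 * real (k+1) / r * \<bar>d\<bar> = \<mu> * \<bar>w\<bar>"
      using X0 by (simp add: a_def \<mu>_def d_def abs_divide)
    also have "exp (\<mu> * \<bar>w\<bar>) \<le> exp (\<mu> * w) + exp (- \<mu> * w)"
      by (cases "w \<ge> 0") (auto simp: abs_if add_increasing2 add_increasing)
    hence "K * exp (\<mu> * \<bar>w\<bar>) \<le> K * (exp (\<mu> * w) + exp (- \<mu> * w))"
      by (intro mult_left_mono) (auto simp: K_def)
    also have "exp (\<mu> * w) + exp (- \<mu> * w) = \<Phi> \<mu> (v, Y) + \<Phi> (-\<mu>) (v, Y)"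
      by (simp add: \<Phi>_def w_def S_def b_def N_def \<Delta>_def)
    finally show ?thesis unfolding z b_def .
  qed
  have fin: "finite (set_pmf (pds n \<rho> q0 q1))"
    unfolding pds_def using fin_vertices fin_edges by simp
  have int: "integrable (measure_pmf (pds n \<rho> q0 q1)) f" for f :: "_ \<Rightarrow> real"
    by (rule integrable_measure_pmf_finite[OF fin])
  have mg: "measure_pmf.expectation (pds n \<rho> q0 q1) (\<Phi> t) \<le> exp (N * p1 * \<mu>^2)" if "t = \<mu> \<or> t = -\<mu>" for t
  proof -
    have t1: "\<bar>t\<bar> \<le> 1" using that mu0 mu1 by auto
    have t2: "t^2 = \<mu>^2" using that by auto
    have "measure_pmf.expectation (pds n \<rho> q0 q1) (\<Phi> t) \<le> exp (real (n-1) * (q0 + (q1 - q0) * \<rho>) * t^2)"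
      unfolding \<Phi>_def using mgf_total[OF n _ _ _ _ _ t1, of \<rho> q0 q1] rho q by simp
    thus ?thesis by (simp add: t2 N_def p1_def \<Delta>_def)
  qed
  have "measure_pmf.expectation (pds n \<rho> q0 q1)
           (\<lambda>(v, Y). (tau k (1 / ((q1 - q0) * \<rho>) *
                 (1 / real (n - 1) * (\<Sum>i=2..n. of_bool (Y (1, i))) - q0))
               - of_bool (v 1))^2)
      \<le> measure_pmf.expectation (pds n \<rho> q0 q1) (\<lambda>x. K * (\<Phi> \<mu> x + \<Phi> (-\<mu>) x))"
    by (rule integral_mono[OF int int]) (use pt in auto)
  also have "\<dots> = K * (measure_pmf.expectation (pds n \<rho> q0 q1) (\<Phi> \<mu>) + measure_pmf.expectation (pds n \<rho> q0 q1) (\<Phi> (-\<mu>)))"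
    by (simp add: Bochner_Integration.integral_add[OF int int])
  also have "\<dots> \<le> K * (exp (N * p1 * \<mu>^2) + exp (N * p1 * \<mu>^2))"
    using mg[of \<mu>] mg[of "-\<mu>"] by (intro mult_left_mono add_mono) (auto simp: K_def)
  also have "\<dots> \<le> K * (2 * exp (real (k+1)))"
    using B by (intro mult_left_mono) (auto simp: K_def)
  also have "\<dots> \<le> real (2*k+1)^2 * r ^ (2*k)"
  proof -
    have "exp (real (k+1)) = exp 1 ^ (k+1)" using exp_of_nat_mult[of "k+1" "1::real"] by (simp only: mult_1_right)
    also have "\<dots> \<le> 3 ^ (k+1)" by (intro power_mono exp_le) auto
    also have "\<dots> = 3 * 3^k" by simp
    also have "\<dots> \<le> 3 * 16^k" by (intro mult_left_mono power_mono) auto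
    finally have f: "exp (real (k+1)) \<le> 3 * 16^k" .
    have "(0::real) \<le> 16^k" by simp
    hence "2 * exp (real (k+1)) \<le> 256 * 16^k" using f by linarith
    hence "K * (2 * exp (real (k+1))) \<le> K * (256 * 16^k)" by (intro mult_left_mono) (auto simp: K_def)
    also have "\<dots> = real (2*k+1)^2 * r ^ (2*k)" by (simp add: K_def)
    finally show ?thesis .
  qed
  finally show ?thesis .
qed


end
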